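(* In the Euclidean plane or space, let ${\rm O},{\rm A},{\rm B}$ be three distinct points such that ${\rm A}$ and ${\rm B}$ lie on a same ray from ${\rm O}$. For every $T>0$ there is a unique direct Keplerian arc around ${\rm O}$ going from ${\rm A}$ to ${\rm B}$ with elapsed time $T$, and this arc is rectilinear.
   Context: Units are normalized so that the Kepler problem with fixed center ${\rm O}$ is $\ddot q=-q/|q|^3$. A Keplerian arc around ${\rm O}$ from ${\rm A}$ to ${\rm B}$ is a solution restricted to a compact time interval $[t_{\rm A},t_{\rm B}]$, $t_{\rm A}<t_{\rm B}$, with $q(t_{\rm A})={\rm A}$, $q(t_{\rm B})={\rm B}$; elapsed time $t_{\rm B}-t_{\rm A}$. Rectilinear motions are extended after collision with ${\rm O}$ (bounce back along the same ray with the same energy). An arc is indirect if its convex hull contains ${\rm O}$, direct otherwise. *)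

theory Defs
  imports "HOL-Analysis.Analysis"
begin

definition kepler_classical :: "'a::euclidean_space \<Rightarrow> (real \<Rightarrow> 'a) \<Rightarrow> real \<Rightarrow> real \<Rightarrow> bool" where
  "kepler_classical Oc q tA tB \<longleftrightarrow>
     (\<exists>v. \<forall>t\<in>{tA..tB}. q t \<noteq> Oc \<and>
        (q has_vector_derivative v t) (at t within {tA..tB}) \<and>
        (v has_vector_derivative (- (1 / norm (q t - Oc) ^ 3) *\<^sub>R (q t - Oc))) (at t within {tA..tB}))"

text \<open>Rectilinear motion along the ray Oc + r u (r \<ge> 0), possibly with collisions with Oc,
  extended after each collision by bouncing back along the same ray with the same energy h.\<close>
definition kepler_rectilinear_bounce :: "'a::euclidean_space \<Rightarrow> (real \<Rightarrow> 'a) \<Rightarrow> real \<Rightarrow> real \<Rightarrow> bool" where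
  "kepler_rectilinear_bounce Oc q tA tB \<longleftrightarrow>
     (\<exists>u r rd h. norm u = 1 \<and>
        (\<forall>t\<in>{tA..tB}. r t \<ge> 0 \<and> q t = Oc + r t *\<^sub>R u) \<and>
        continuous_on {tA..tB} r \<and>
        finite {t\<in>{tA..tB}. r t = 0} \<and>
        (\<forall>t\<in>{tA..tB}. r t \<noteq> 0 \<longrightarrow>
            (r has_real_derivative rd t) (at t within {tA..tB}) \<and>
            (rd has_real_derivative (- 1 / (r t)\<^sup>2)) (at t within {tA..tB}) \<and>
            (rd t)\<^sup>2 / 2 - 1 / r t = h))"

definition kepler_arc :: "'a::euclidean_space \<Rightarrow> 'a \<Rightarrow> 'a \<Rightarrow> (real \<Rightarrow> 'a) \<Rightarrow> real \<Rightarrow> real \<Rightarrow> bool" where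
  "kepler_arc Oc A B q tA tB \<longleftrightarrow> tA < tB \<and> q tA = A \<and> q tB = B \<and>
     (kepler_classical Oc q tA tB \<or> kepler_rectilinear_bounce Oc q tA tB)"

definition direct_arc :: "'a::euclidean_space \<Rightarrow> (real \<Rightarrow> 'a) \<Rightarrow> real \<Rightarrow> real \<Rightarrow> bool" where
  "direct_arc Oc q tA tB \<longleftrightarrow> Oc \<notin> convex hull (q ` {tA..tB})"

definition rectilinear_arc :: "'a::euclidean_space \<Rightarrow> (real \<Rightarrow> 'a) \<Rightarrow> real \<Rightarrow> real \<Rightarrow> bool" where
  "rectilinear_arc Oc q tA tB \<longleftrightarrow> (\<exists>u. u \<noteq> 0 \<and> (\<forall>t\<in>{tA..tB}. \<exists>l. q t = Oc + l *\<^sub>R u))"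

end

theory Submission
  imports Defs "HOL-Real_Asymp.Real_Asymp"
begin

definition sol1 :: "(real \<Rightarrow> real) \<Rightarrow> (real \<Rightarrow> real) \<Rightarrow> real \<Rightarrow> real \<Rightarrow> real \<Rightarrow> bool" where
  "sol1 r rd T a b \<longleftrightarrow> r 0 = a \<and> r T = b \<and> (\<forall>t\<in>{0..T}. r t > 0 \<and>
     (r has_real_derivative rd t) (at t) \<and> (rd has_real_derivative (-1/(r t)^2)) (at t))"

lemma param_sol:
  fixes R K Rd Kd Vd :: "real \<Rightarrow> real"
  assumes s: "lo < s1" "s1 < s2" "s2 < hi"
  and K: "\<And>E. lo < E \<Longrightarrow> E < hi \<Longrightarrow> (K has_real_derivative Kd E) (at E)"
  and Kpos: "\<And>E. lo < E \<Longrightarrow> E < hi \<Longrightarrow> Kd E > 0"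
  and R: "\<And>E. lo < E \<Longrightarrow> E < hi \<Longrightarrow> (R has_real_derivative Rd E) (at E)"
  and Rpos: "\<And>E. lo < E \<Longrightarrow> E < hi \<Longrightarrow> R E > 0"
  and V: "\<And>E. lo < E \<Longrightarrow> E < hi \<Longrightarrow> ((\<lambda>E. Rd E / Kd E) has_real_derivative Vd E) (at E)"
  and VV: "\<And>E. lo < E \<Longrightarrow> E < hi \<Longrightarrow> Vd E / Kd E = -1/(R E)^2"
  shows "\<exists>r rd. sol1 r rd (K s2 - K s1) (R s1) (R s2)"
proof -
  define a' where "a' = (lo+s1)/2"
  define b' where "b' = (s2+hi)/2"
  have ab: "lo < a'" "a' < s1" "s2 < b'" "b' < hi" using s by (auto simp: a'_def b'_def)
  have mono: "K x < K y" if "a' \<le> x" "x < y" "y \<le> b'" for x y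
    apply (rule DERIV_pos_imp_increasing[OF that(2)])
    using that ab K Kpos by (meson le_less_trans less_le_trans order.strict_trans1)
  have mono_iff: "K x < K y \<longleftrightarrow> x < y" if "a' \<le> x" "x \<le> b'" "a' \<le> y" "y \<le> b'" for x y
    using mono that by (metis linorder_neqE_linordered_idom order_less_asym)
  have contK: "isCont K x" if "a' \<le> x" "x \<le> b'" for x
    using K that ab by (meson DERIV_isCont less_le_trans order.strict_trans1 order_le_less_trans)
  define g where "g y = (THE E. a' \<le> E \<and> E \<le> b' \<and> K E = y)" for y
  have gprop: "a' \<le> g y \<and> g y \<le> b' \<and> K (g y) = y" if yy: "K a' \<le> y" "y \<le> K b'" for y
  proof -
    obtain E where E: "a' \<le> E" "E \<le> b'" "K E = y"
    proof -
      have "a' \<le> b'" using ab s by simp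
      then have "\<exists>x\<ge>a'. x \<le> b' \<and> K x = y"
        using IVT[of K a' y b'] yy contK by blast
      then show ?thesis using that by blast
    qed
    have "\<exists>!E. a' \<le> E \<and> E \<le> b' \<and> K E = y"
      using E mono_iff by (metis linorder_neqE_linordered_idom order_less_irrefl)
    then show ?thesis unfolding g_def by (rule theI')
  qed
  have gK: "g (K z) = z" if "a' \<le> z" "z \<le> b'" for z
  proof -
    have "K a' \<le> K z" "K z \<le> K b'" using mono_iff that ab
      by (smt (verit))+
    from gprop[OF this] that mono_iff show ?thesis by (smt (verit))
  qed
  define h where "h t = g (K s1 + t)" for t
  have hprop: "a' < h t \<and> h t < b' \<and> K (h t) = K s1 + t \<and> isCont g (K s1 + t)
      \<and> (h has_real_derivative inverse (Kd (h t))) (at t)"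
    if t: "t \<in> {0..K s2 - K s1}" for t
  proof -
    let ?y = "K s1 + t"
    have k1: "K a' < K s1" "K s2 < K b'" using mono ab s by auto
    have y: "K a' < ?y" "?y < K b'" using t k1 by auto
    from gprop[of ?y] y have gy: "a' \<le> g ?y" "g ?y \<le> b'" "K (g ?y) = ?y" by auto
    have gy2: "a' < g ?y" "g ?y < b'" using gy y by (metis order_less_le)+
    have ic: "isCont g ?y"
      using isCont_inverse_function2[of a' "g ?y" b' g K] gy2 gK contK gy by auto
    have dK: "(K has_real_derivative Kd (g ?y)) (at (g ?y))"
      using K gy2 ab by auto
    have kp: "Kd (g ?y) \<noteq> 0" using Kpos gy2 ab by (smt (verit))
    have dg: "(g has_real_derivative inverse (Kd (g ?y))) (at ?y)"
      apply (rule DERIV_inverse_function[where f=K and g=g and x="?y", OF dK kp, of "K a'" "K b'"])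
      using y gprop ic by auto
    have "(h has_real_derivative inverse (Kd (g ?y)) * 1) (at t)"
      unfolding h_def
      by (rule DERIV_chain2[where f=g and g="\<lambda>t. K s1 + t" and x=t, OF dg]) (auto intro!: derivative_eq_intros)
    then show ?thesis using gy2 gy ic by (simp add: h_def)
  qed
  define r where "r t = R (h t)" for t
  define rd where "rd t = Rd (h t) / Kd (h t)" for t
  have "sol1 r rd (K s2 - K s1) (R s1) (R s2)"
    unfolding sol1_def
  proof (intro conjI ballI)
    show "r 0 = R s1" unfolding r_def h_def using gK[of s1] ab s by simp
    show "r (K s2 - K s1) = R s2" unfolding r_def h_def using gK[of s2] ab s by simp
  next
    fix t assume t: "t \<in> {0..K s2 - K s1}"
    note hp = hprop[OF t]
    have rng: "lo < h t" "h t < hi" using hp ab by auto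
    show "r t > 0" unfolding r_def using Rpos rng by auto
    have "(r has_real_derivative Rd (h t) * inverse (Kd (h t))) (at t)"
      unfolding r_def by (rule DERIV_chain2[where f=R and g=h and x=t, OF R[OF rng]]) (use hp in auto)
    then show "(r has_real_derivative rd t) (at t)" by (simp add: rd_def divide_inverse)
    have "(rd has_real_derivative Vd (h t) * inverse (Kd (h t))) (at t)"
      unfolding rd_def
      by (rule DERIV_chain2[where f="\<lambda>E. Rd E / Kd E" and g=h and x=t, OF V[OF rng]]) (use hp in auto)
    then show "(rd has_real_derivative (-1/(r t)^2)) (at t)"
      using VV[OF rng] by (simp add: r_def divide_inverse)
  qed
  then show ?thesis by blast
qed

lemma cos_lt1: "0 < E \<Longrightarrow> E < 2*pi \<Longrightarrow> cos E < 1"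
proof -
  assume E: "0 < E" "E < 2*pi"
  have "cos E \<noteq> 1"
  proof
    assume "cos E = 1"
    then obtain n::int where n: "E = real_of_int n * 2 * pi" using cos_one_2pi_int by blast
    have "0 < real_of_int n * (2*pi)" using E n by (simp add: mult.assoc)
    then have "0 < real_of_int n" using pi_gt_zero by (simp add: zero_less_mult_iff)
    moreover have "real_of_int n * (2*pi) < 1 * (2*pi)" using E n by (simp add: mult.assoc)
    then have "real_of_int n < 1" using pi_gt_zero by (simp only: mult_less_cancel_right)
    ultimately show False by simp
  qed
  then show ?thesis using cos_le_one[of E] by linarith
qed

lemma cosh_gt1: "0 < (F::real) \<Longrightarrow> 1 < cosh F"
  using cosh_real_strict_mono[of 0 F] by simp

lemma ell_sol:
  fixes m E1 E2 :: real
  assumes m: "m > 0" and E: "0 < E1" "E1 < E2" "E2 < 2*pi"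
  shows "\<exists>r rd. sol1 r rd (m^3*((E2 - sin E2) - (E1 - sin E1))) (m^2*(1 - cos E1)) (m^2*(1 - cos E2))"
proof -
  have c: "1 - cos E > 0" if "0 < E" "E < 2*pi" for E using cos_lt1[OF that] by simp
  have "\<exists>r rd. sol1 r rd ((\<lambda>E. m^3*(E - sin E)) E2 - (\<lambda>E. m^3*(E - sin E)) E1)
         ((\<lambda>E. m^2*(1 - cos E)) E1) ((\<lambda>E. m^2*(1 - cos E)) E2)"
  proof (rule param_sol[where lo=0 and hi="2*pi" and Kd="\<lambda>E. m^3*(1 - cos E)" and Rd="\<lambda>E. m^2 * sin E"
        and Vd="\<lambda>E. -1/(m*(1 - cos E))"])
    fix E :: real assume e: "0 < E" "E < 2*pi"
    note cE = c[OF e]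
    show "((\<lambda>E. m^3*(E - sin E)) has_real_derivative m^3*(1 - cos E)) (at E)"
      by (auto intro!: derivative_eq_intros)
    show "m^3*(1 - cos E) > 0" using cE m by simp
    show "((\<lambda>E. m^2*(1 - cos E)) has_real_derivative m^2 * sin E) (at E)"
      by (auto intro!: derivative_eq_intros)
    show "(\<lambda>E. m^2*(1 - cos E)) E > 0" using cE m by simp
    have eq: "\<forall>\<^sub>F x in nhds E. m^2 * sin x / (m^3*(1 - cos x)) = sin x / (m * (1 - cos x))"
    proof -
      have "\<forall>\<^sub>F x in nhds E. x \<in> {0<..<2*pi}" using e by (intro eventually_nhds_in_open) auto
      then show ?thesis
        by eventually_elim (use m in \<open>simp add: power2_eq_square power3_eq_cube\<close>)
    qed
    have d: "((\<lambda>x. sin x / (m * (1 - cos x))) has_real_derivative -1/(m*(1 - cos E))) (at E)"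
    proof -
      have "((\<lambda>x. sin x / (m * (1 - cos x))) has_real_derivative
          (cos E * (m * (1 - cos E)) - sin E * (m * sin E)) / (m * (1 - cos E))^2) (at E)"
        using cE m by (auto intro!: derivative_eq_intros simp: power2_eq_square)
      moreover have "(cos E * (m * (1 - cos E)) - sin E * (m * sin E)) / (m * (1 - cos E))^2 = -1/(m*(1 - cos E))"
      proof -
        have ss: "sin E * sin E = 1 - cos E * cos E" using sin_squared_eq[of E] by (simp add: power2_eq_square)
        have "cos E * (m * (1 - cos E)) - sin E * (m * sin E) = - m * (1 - cos E)"
          by (simp add: algebra_simps ss)
        then show ?thesis using cE m by (simp add: power2_eq_square)
      qed
      ultimately show ?thesis by simp
    qed
    show "((\<lambda>E. m^2 * sin E / (m^3*(1 - cos E))) has_real_derivative -1/(m*(1 - cos E))) (at E)"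
      using DERIV_cong_ev[OF refl eq refl] d by blast
    show "-1/(m*(1 - cos E)) / (m^3*(1 - cos E)) = -1/((\<lambda>E. m^2*(1 - cos E)) E)^2"
      using cE m by (simp add: power2_eq_square power3_eq_cube field_simps)
  qed (use E in auto)
  then show ?thesis by (simp add: algebra_simps)
qed

lemma hyp_sol:
  fixes m F1 F2 :: real
  assumes m: "m > 0" and F: "0 < F1" "F1 < F2"
  shows "\<exists>r rd. sol1 r rd (m^3*((sinh F2 - F2) - (sinh F1 - F1))) (m^2*(cosh F1 - 1)) (m^2*(cosh F2 - 1))"
proof -
  have c: "cosh F - 1 > (0::real)" if "0 < F" for F :: real using cosh_gt1[OF that] by simp
  have "\<exists>r rd. sol1 r rd ((\<lambda>E. m^3*(sinh E - E)) F2 - (\<lambda>E. m^3*(sinh E - E)) F1)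
         ((\<lambda>E. m^2*(cosh E - 1)) F1) ((\<lambda>E. m^2*(cosh E - 1)) F2)"
  proof (rule param_sol[where lo=0 and hi="F2+1" and Kd="\<lambda>E. m^3*(cosh E - 1)" and Rd="\<lambda>E. m^2 * sinh E"
        and Vd="\<lambda>E. -1/(m*(cosh E - 1))"])
    fix E :: real assume e: "0 < E" "E < F2+1"
    note cE = c[OF e(1)]
    show "((\<lambda>E. m^3*(sinh E - E)) has_real_derivative m^3*(cosh E - 1)) (at E)"
      by (auto intro!: derivative_eq_intros)
    show "m^3*(cosh E - 1) > 0" using cE m by simp
    show "((\<lambda>E. m^2*(cosh E - 1)) has_real_derivative m^2 * sinh E) (at E)"
      by (auto intro!: derivative_eq_intros)
    show "(\<lambda>E. m^2*(cosh E - 1)) E > 0" using cE m by simp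
    have eq: "\<forall>\<^sub>F x in nhds E. m^2 * sinh x / (m^3*(cosh x - 1)) = sinh x / (m * (cosh x - 1))"
    proof -
      have "\<forall>\<^sub>F x in nhds E. x \<in> {0<..}" using e by (intro eventually_nhds_in_open) auto
      then show ?thesis
        by eventually_elim (use m in \<open>simp add: power2_eq_square power3_eq_cube\<close>)
    qed
    have d: "((\<lambda>x. sinh x / (m * (cosh x - 1))) has_real_derivative -1/(m*(cosh E - 1))) (at E)"
    proof -
      have "((\<lambda>x. sinh x / (m * (cosh x - 1))) has_real_derivative
          (cosh E * (m * (cosh E - 1)) - sinh E * (m * sinh E)) / (m * (cosh E - 1))^2) (at E)"
        using cE m by (auto intro!: derivative_eq_intros simp: power2_eq_square)
      moreover have "(cosh E * (m * (cosh E - 1)) - sinh E * (m * sinh E)) / (m * (cosh E - 1))^2 = -1/(m*(cosh E - 1))"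
      proof -
        have "cosh E * (m * (cosh E - 1)) - sinh E * (m * sinh E) = m * ((cosh E)^2 - (sinh E)^2) - m * cosh E"
          by (simp add: algebra_simps power2_eq_square)
        also have "\<dots> = - m * (cosh E - 1)" by (simp add: hyperbolic_pythagoras algebra_simps)
        finally have "cosh E * (m * (cosh E - 1)) - sinh E * (m * sinh E) = - m * (cosh E - 1)" .
        then show ?thesis using cE m by (simp add: power2_eq_square)
      qed
      ultimately show ?thesis by simp
    qed
    show "((\<lambda>E. m^2 * sinh E / (m^3*(cosh E - 1))) has_real_derivative -1/(m*(cosh E - 1))) (at E)"
      using DERIV_cong_ev[OF refl eq refl] d by blast
    show "-1/(m*(cosh E - 1)) / (m^3*(cosh E - 1)) = -1/((\<lambda>E. m^2*(cosh E - 1)) E)^2"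
      using cE m by (simp add: power2_eq_square power3_eq_cube field_simps)
  qed (use F in auto)
  then show ?thesis by (simp add: algebra_simps)
qed

lemma par_sol:
  fixes F1 F2 :: real
  assumes F: "0 < F1" "F1 < F2"
  shows "\<exists>r rd. sol1 r rd (F2^3/6 - F1^3/6) (F1^2/2) (F2^2/2)"
proof (rule param_sol[where lo=0 and hi="F2+1" and Kd="\<lambda>E. E^2/2" and Rd="\<lambda>E. E"
        and Vd="\<lambda>E. -2/E^2" and K="\<lambda>E. E^3/6" and R="\<lambda>E. E^2/2"])
  fix E :: real assume e: "0 < E" "E < F2+1"
  show "((\<lambda>E. E^3/6) has_real_derivative E^2/2) (at E)"
    by (auto intro!: derivative_eq_intros simp: power2_eq_square power3_eq_cube)
  show "E^2/2 > 0" using e by simp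
  show "((\<lambda>E. E^2/2) has_real_derivative E) (at E)"
    by (auto intro!: derivative_eq_intros)
  show "E^2/2 > 0" using e by simp
  have eq: "\<forall>\<^sub>F x in nhds E. x / (x^2/2) = 2 / x"
  proof -
    have "\<forall>\<^sub>F x in nhds E. x \<in> {0<..}" using e by (intro eventually_nhds_in_open) auto
    then show ?thesis
      by eventually_elim (simp add: power2_eq_square)
  qed
  have d: "((\<lambda>x. 2 / x) has_real_derivative -2/E^2) (at E)"
    using e by (auto intro!: derivative_eq_intros simp: power2_eq_square)
  show "((\<lambda>E. E / (E^2/2)) has_real_derivative -2/E^2) (at E)"
    using DERIV_cong_ev[OF refl eq refl] d by blast
  show "-2/E^2 / (E^2/2) = -1/(E^2/2)^2"
    using e by (simp add: power2_eq_square field_simps)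
qed (use F in auto)

definition c0 :: real where "c0 = 1 / (3 * (1/2::real) powr (1/2))"
definition He :: "real \<Rightarrow> real" where "He E = (E - sin E)/((1 - cos E) * sqrt (1 - cos E))"
definition Hh :: "real \<Rightarrow> real" where "Hh F = (sinh F - F)/((cosh F - 1) * sqrt (cosh F - 1))"
definition G :: "real \<Rightarrow> real" where
  "G y = (if 0 < y then He (arccos (1 - y)) else if y = 0 then c0 else Hh (arcosh (1 - y)))"

lemma c0_eq: "c0 = sqrt 2 / 3"
  unfolding c0_def by (simp add: powr_half_sqrt real_sqrt_divide field_simps)

lemma He_lim: "(He \<longlongrightarrow> c0) (at_right 0)"
  unfolding He_def c0_def by real_asymp

lemma Hh_lim: "(Hh \<longlongrightarrow> c0) (at_right 0)"
  unfolding Hh_def c0_def by real_asymp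

lemma Hh_lim_top: "(Hh \<longlongrightarrow> 0) at_top"
  unfolding Hh_def by real_asymp

lemma arcosh_lim: "filterlim (\<lambda>y::real. arcosh (1 - y)) at_top at_bot"
  unfolding arcosh_def by real_asymp

lemma G_ell:
  assumes "0 < y" "y \<le> 2"
  shows "0 < arccos (1 - y)" "arccos (1 - y) \<le> pi" "1 - cos (arccos (1 - y)) = y"
    "arccos (1 - y) - sin (arccos (1 - y)) = y * sqrt y * G y"
proof -
  show p: "0 < arccos (1 - y)"
    using arccos_less_arccos[of "1 - y" 1] assms by simp
  show "arccos (1 - y) \<le> pi" using arccos_bounded[of "1 - y"] assms by simp
  show c: "1 - cos (arccos (1 - y)) = y" using assms by (simp add: cos_arccos)
  show "arccos (1 - y) - sin (arccos (1 - y)) = y * sqrt y * G y"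
    using assms c by (simp add: G_def He_def)
qed

lemma G_hyp:
  assumes "y < 0"
  shows "0 < arcosh (1 - y)" "cosh (arcosh (1 - y)) - 1 = - y"
    "sinh (arcosh (1 - y)) - arcosh (1 - y) = (- y) * sqrt (- y) * G y"
proof -
  show "0 < arcosh (1 - y)" using assms arcosh_real_gt_1_iff[of "1 - y"] by simp
  show c: "cosh (arcosh (1 - y)) - 1 = - y" using assms by (simp add: cosh_arcosh_real)
  have "- y * sqrt (- y) \<noteq> 0" using assms by simp
  then show "sinh (arcosh (1 - y)) - arcosh (1 - y) = (- y) * sqrt (- y) * G y"
    using assms c by (simp add: G_def Hh_def)
qed

lemma G_right: "(G \<longlongrightarrow> c0) (at_right 0)"
proof -
  have cont: "continuous_on {0..2} (\<lambda>y::real. arccos (1 - y))"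
    by (intro continuous_on_arccos continuous_intros) auto
  have "((\<lambda>y::real. arccos (1 - y)) \<longlongrightarrow> arccos (1 - 0)) (at 0 within {0..2})"
    using cont[unfolded continuous_on_def, rule_format, of 0] by simp
  then have t: "((\<lambda>y::real. arccos (1 - y)) \<longlongrightarrow> 0) (at_right 0)"
    by (simp add: at_within_Icc_at_right)
  have ev: "\<forall>\<^sub>F y in at_right 0. 0 < y \<and> y < (2::real)"
    by (simp add: eventually_at_right_field) (auto intro!: exI[of _ 1])
  have "\<forall>\<^sub>F y in at_right 0. arccos (1 - y) > 0"
    using ev by (rule eventually_mono) (auto intro: G_ell(1))
  then have "filterlim (\<lambda>y::real. arccos (1 - y)) (at_right 0) (at_right 0)"
    by (rule tendsto_imp_filterlim_at_right[OF t])
  then have "((\<lambda>y. He (arccos (1 - y))) \<longlongrightarrow> c0) (at_right 0)"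
    by (rule filterlim_compose[OF He_lim])
  moreover have "\<forall>\<^sub>F y in at_right 0. He (arccos (1 - y)) = G y"
    using ev by (rule eventually_mono) (simp add: G_def)
  ultimately show ?thesis by (rule Lim_transform_eventually)
qed

lemma G_left: "(G \<longlongrightarrow> c0) (at_left 0)"
proof -
  have cont: "continuous_on {..0} (\<lambda>y::real. arcosh (1 - y))"
    by (intro continuous_on_arcosh' continuous_intros) auto
  have "((\<lambda>y::real. arcosh (1 - y)) \<longlongrightarrow> arcosh (1 - 0)) (at 0 within {..0})"
    using cont[unfolded continuous_on_def, rule_format, of 0] by simp
  moreover have "arcosh (1 - 0::real) = 0" by (simp add: arcosh_def)
  ultimately have "((\<lambda>y::real. arcosh (1 - y)) \<longlongrightarrow> 0) (at 0 within {..0})" by simp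
  then have "((\<lambda>y::real. arcosh (1 - y)) \<longlongrightarrow> 0) (at 0 within {..<0})"
    by (rule tendsto_within_subset) auto
  then have t: "((\<lambda>y::real. arcosh (1 - y)) \<longlongrightarrow> 0) (at_left 0)" by simp
  have ev: "\<forall>\<^sub>F y in at_left 0. y < (0::real)"
    by (simp add: eventually_at_left_field) (auto intro!: exI[of _ "-1"])
  have "\<forall>\<^sub>F y in at_left 0. arcosh (1 - y) > (0::real)"
    by (rule eventually_mono[OF ev G_hyp(1)])
  then have "filterlim (\<lambda>y::real. arcosh (1 - y)) (at_right 0) (at_left 0)"
    by (rule tendsto_imp_filterlim_at_right[OF t])
  then have "((\<lambda>y. Hh (arcosh (1 - y))) \<longlongrightarrow> c0) (at_left 0)"
    by (rule filterlim_compose[OF Hh_lim])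
  moreover have "\<forall>\<^sub>F y in at_left 0. Hh (arcosh (1 - y)) = G y"
    using ev by (rule eventually_mono) (simp add: G_def)
  ultimately show ?thesis by (rule Lim_transform_eventually)
qed

lemma Ge_cont: "continuous_on {0<..2} (\<lambda>y. (arccos (1 - y) - sin (arccos (1 - y))) / (y * sqrt y))"
proof -
  have a: "continuous_on {0<..2} (\<lambda>y::real. arccos (1 - y))"
    by (rule continuous_on_arccos) (auto intro: continuous_intros)
  have b: "continuous_on {0<..2} (\<lambda>y::real. sin (arccos (1 - y)))"
    by (rule continuous_on_sin[OF a])
  have c: "continuous_on {0<..2} (\<lambda>y::real. y * sqrt y)"
    by (intro continuous_intros)
  show ?thesis
    by (rule continuous_on_divide[OF continuous_on_diff[OF a b] c]) auto
qed
lemma Gh_cont: "continuous_on {..<0} (\<lambda>y. (sinh (arcosh (1 - y)) - arcosh (1 - y)) / ((- y) * sqrt (- y)))"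
proof -
  have a: "continuous_on {..<0} (\<lambda>y::real. arcosh (1 - y))"
    by (rule continuous_on_arcosh') (auto intro: continuous_intros)
  have b: "continuous_on {..<0} (\<lambda>y::real. sinh (arcosh (1 - y)))"
    by (rule continuous_on_sinh[OF a])
  have c: "continuous_on {..<0} (\<lambda>y::real. (- y) * sqrt (- y))"
    by (intro continuous_intros)
  show ?thesis
    by (rule continuous_on_divide[OF continuous_on_diff[OF b a] c]) auto
qed
lemma G_bot: "(G \<longlongrightarrow> 0) at_bot"
proof -
  have "((\<lambda>y. Hh (arcosh (1 - y))) \<longlongrightarrow> 0) at_bot"
    by (rule filterlim_compose[OF Hh_lim_top arcosh_lim])
  moreover have "\<forall>\<^sub>F y in at_bot. Hh (arcosh (1 - y)) = G y"
    unfolding eventually_at_bot_linorder by (rule exI[of _ "-1"]) (auto simp: G_def)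
  ultimately show ?thesis by (rule Lim_transform_eventually)
qed
lemma G_isCont0: "isCont G 0"
proof -
  have "G 0 = c0" by (simp add: G_def)
  then show ?thesis unfolding isCont_def using filterlim_split_at[OF G_left G_right] by simp
qed

lemma G_eq_ell: "y \<in> {0<..2} \<Longrightarrow> G y = (arccos (1 - y) - sin (arccos (1 - y))) / (y * sqrt y)"
proof -
  assume y: "y \<in> {0<..2}"
  then have nz: "y * sqrt y \<noteq> 0" by simp
  have "arccos (1 - y) - sin (arccos (1 - y)) = y * sqrt y * G y" using G_ell(4)[of y] y by simp
  then show ?thesis using nz by (simp add: eq_divide_eq)
qed

lemma G_eq_hyp: "y \<in> {..<0} \<Longrightarrow> G y = (sinh (arcosh (1 - y)) - arcosh (1 - y)) / ((- y) * sqrt (- y))"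
proof -
  assume y: "y \<in> {..<0}"
  then have nz: "(- y) * sqrt (- y) \<noteq> 0" by simp
  have "sinh (arcosh (1 - y)) - arcosh (1 - y) = (- y) * sqrt (- y) * G y" using G_hyp(3)[of y] y by simp
  then show ?thesis using nz by (simp add: eq_divide_eq)
qed

lemma G_cont_ell: "continuous_on {0<..2} G"
  using Ge_cont by (rule continuous_on_eq) (simp add: G_eq_ell)

lemma G_cont: "continuous_on {..2} G"
  unfolding continuous_on_eq_continuous_within
proof
  fix y :: real assume y: "y \<in> {..2}"
  consider "y < 0" | "y = 0" | "0 < y \<and> y < 2" | "y = 2" using y by force
  then show "continuous (at y within {..2}) G"
  proof cases
    case 1
    have "continuous_on {..<0} G"
      using Gh_cont by (rule continuous_on_eq) (simp add: G_eq_hyp)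
    then have "isCont G y" using 1 by (simp add: continuous_on_eq_continuous_at)
    then show ?thesis by (rule continuous_at_imp_continuous_within)
  next
    case 2
    then show ?thesis using G_isCont0 continuous_at_imp_continuous_within by blast
  next
    case 3
    have "continuous_on {0<..<2} G"
      by (rule continuous_on_subset[OF G_cont_ell]) auto
    then have "isCont G y" using 3 by (simp add: continuous_on_eq_continuous_at)
    then show ?thesis by (rule continuous_at_imp_continuous_within)
  next
    case 4
    have "continuous_on {1..2} G"
      by (rule continuous_on_subset[OF G_cont_ell]) auto
    then have "(G \<longlongrightarrow> G 2) (at 2 within {1..2})"
      unfolding continuous_on_def by auto
    then have l: "(G \<longlongrightarrow> G 2) (at_left 2)" by (simp add: at_within_Icc_at_left)
    have e: "{..2::real} - {2} = {..<2} - {2}" by auto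
    have "at (2::real) within {..2} = at_left 2" unfolding at_within_def e by simp
    then show ?thesis using l 4 unfolding continuous_within by simp
  qed
qed

definition Tdir :: "real \<Rightarrow> real \<Rightarrow> real \<Rightarrow> real" where
  "Tdir a b e = b * sqrt b * G (b * e) - a * sqrt a * G (a * e)"
definition Tov :: "real \<Rightarrow> real \<Rightarrow> real \<Rightarrow> real" where
  "Tov a b e = (- (b * sqrt b * G (b * e)) - a * sqrt a * G (a * e)) + 2 * pi / (e * sqrt e)"

lemma scal3: "e > 0 \<Longrightarrow> y > 0 \<Longrightarrow> (1 / sqrt e)^3 * (y * e * sqrt (y * e)) = y * sqrt y"
proof -
  assume e: "e > 0" and y: "y > 0"
  define s where "s = sqrt e"
  have s: "s > 0" "e = s^2" using e by (auto simp: s_def)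
  have q: "sqrt (y * e) = sqrt y * s" using s by (simp add: real_sqrt_mult)
  show ?thesis unfolding q s_def[symmetric] using s by (simp add: power3_eq_cube power2_eq_square field_simps)
qed

lemma scal2: "e > 0 \<Longrightarrow> (1 / sqrt e)^2 * (y * e) = y"
  by (simp add: power2_eq_square)

lemma sol_dir:
  assumes ab: "0 < a" "a < b" and e: "e \<le> 2 / b"
  shows "\<exists>r rd. sol1 r rd (Tdir a b e) a b"
proof -
  have be: "b * e \<le> 2" using e ab by (simp add: field_simps)
  have ae: "a * e < b * e \<or> e \<le> 0" using ab by (cases "e > 0") auto
  consider "e > 0" | "e = 0" | "e < 0" by linarith
  then show ?thesis
  proof cases
    case 1
    define m where "m = 1 / sqrt e"
    have m: "m > 0" using 1 by (simp add: m_def)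
    have y5: "a * e < b * e" using mult_strict_right_mono[OF ab(2) 1] .
    have y: "0 < a * e" "a * e \<le> 2" "0 < b * e" "b * e \<le> 2" "a * e < b * e"
      using 1 ab be y5 by (auto, linarith)
    define E1 where "E1 = arccos (1 - a * e)"
    define E2 where "E2 = arccos (1 - b * e)"
    have E: "0 < E1" "E1 < E2" "E2 < 2 * pi"
      using G_ell(1)[of "a*e"] y arccos_less_arccos[of "1 - b*e" "1 - a*e"] G_ell(2)[of "b*e"] pi_gt_zero
      by (auto simp: E1_def E2_def)
    obtain r rd where sol: "sol1 r rd (m^3*((E2 - sin E2) - (E1 - sin E1))) (m^2*(1 - cos E1)) (m^2*(1 - cos E2))"
      using ell_sol[OF m E] by blast
    have h1: "m^2*(1 - cos E1) = a" unfolding m_def E1_def using G_ell(3)[of "a*e"] y scal2[OF 1] by simp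
    have h2: "m^2*(1 - cos E2) = b" unfolding m_def E2_def using G_ell(3)[of "b*e"] y scal2[OF 1] by simp
    have r1: "E1 - sin E1 = a * e * sqrt (a * e) * G (a*e)" unfolding E1_def using G_ell(4)[of "a*e"] y by simp
    have r2: "E2 - sin E2 = b * e * sqrt (b * e) * G (b*e)" unfolding E2_def using G_ell(4)[of "b*e"] y by simp
    have "m^3*((E2 - sin E2) - (E1 - sin E1)) = m^3 * (b * e * sqrt (b * e) * G (b*e)) - m^3 * (a * e * sqrt (a * e) * G (a*e))"
      unfolding r1 r2 by (simp add: right_diff_distrib)
    also have "\<dots> = Tdir a b e"
    proof -
      have k: "m^3 * (y * e * sqrt (y * e) * g) = y * sqrt y * g" if "y > 0" for y g
      proof -
        have "m^3 * (y * e * sqrt (y * e) * g) = (m^3 * (y * e * sqrt (y * e))) * g" by (simp only: mult.assoc)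
        also have "\<dots> = y * sqrt y * g" using scal3[OF 1 that] by (simp add: m_def)
        finally show ?thesis .
      qed
      have bp: "0 < b" using ab by linarith
      show ?thesis unfolding Tdir_def k[OF ab(1)] k[OF bp] by (rule refl)
    qed
    finally have h3: "m^3*((E2 - sin E2) - (E1 - sin E1)) = Tdir a b e" .
    show ?thesis using sol unfolding h1 h2 h3 by blast
  next
    case 2
    define F1 where "F1 = sqrt (2 * a)"
    define F2 where "F2 = sqrt (2 * b)"
    have F: "0 < F1" "F1 < F2" using ab by (auto simp: F1_def F2_def)
    obtain r rd where sol: "sol1 r rd (F2^3/6 - F1^3/6) (F1^2/2) (F2^2/2)"
      using par_sol[OF F] by blast
    have h1: "F1^2/2 = a" "F2^2/2 = b" using ab by (auto simp: F1_def F2_def)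
    have cube: "sqrt (2 * x)^3 / 6 = x * sqrt x * c0" if "x > 0" for x :: real
    proof -
      have "sqrt (2 * x)^3 = (sqrt (2 * x))^2 * sqrt (2 * x)" by (simp add: power3_eq_cube power2_eq_square)
      also have "\<dots> = 2 * x * sqrt (2 * x)" using that by (subst real_sqrt_pow2) auto
      also have "\<dots> = 2 * x * (sqrt 2 * sqrt x)" by (simp add: real_sqrt_mult)
      finally have "sqrt (2 * x)^3 = 2 * x * (sqrt 2 * sqrt x)" .
      then show ?thesis by (simp add: c0_eq)
    qed
    have G0: "G 0 = c0" by (simp add: G_def)
    have h3: "F2^3/6 - F1^3/6 = Tdir a b e"
      unfolding Tdir_def F1_def F2_def 2 using cube[of a] cube[of b] ab G0 by simp
    show ?thesis using sol unfolding h1 h3 by blast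
  next
    case 3
    define z where "z = - e"
    have z: "z > 0" using 3 by (simp add: z_def)
    define m where "m = 1 / sqrt z"
    have m: "m > 0" using z by (simp add: m_def)
    have y: "a * e < 0" "b * e < 0" "b * e < a * e"
      using 3 ab by (auto simp: mult_strict_right_mono_neg mult_pos_neg)
    define F1 where "F1 = arcosh (1 - a * e)"
    define F2 where "F2 = arcosh (1 - b * e)"
    have F: "0 < F1" "F1 < F2"
      using G_hyp(1)[of "a*e"] y arcosh_real_strict_mono[of "1 - a*e" "1 - b*e"]
      by (auto simp: F1_def F2_def)
    obtain r rd where sol: "sol1 r rd (m^3*((sinh F2 - F2) - (sinh F1 - F1))) (m^2*(cosh F1 - 1)) (m^2*(cosh F2 - 1))"
      using hyp_sol[OF m F] by blast
    have ez: "- (a * e) = a * z" "- (b * e) = b * z" by (auto simp: z_def)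
    have h1: "m^2*(cosh F1 - 1) = a" unfolding m_def F1_def using G_hyp(2)[of "a*e"] y scal2[OF z] ez by simp
    have h2: "m^2*(cosh F2 - 1) = b" unfolding m_def F2_def using G_hyp(2)[of "b*e"] y scal2[OF z] ez by simp
    have r1: "sinh F1 - F1 = a * z * sqrt (a * z) * G (a*e)" unfolding F1_def using G_hyp(3)[of "a*e"] y ez by simp
    have r2: "sinh F2 - F2 = b * z * sqrt (b * z) * G (b*e)" unfolding F2_def using G_hyp(3)[of "b*e"] y ez by simp
    have "m^3*((sinh F2 - F2) - (sinh F1 - F1)) = m^3 * (b * z * sqrt (b * z) * G (b*e)) - m^3 * (a * z * sqrt (a * z) * G (a*e))"
      unfolding r1 r2 by (simp add: right_diff_distrib)
    also have "\<dots> = Tdir a b e"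
    proof -
      have k: "m^3 * (y * z * sqrt (y * z) * g) = y * sqrt y * g" if "y > 0" for y g
      proof -
        have "m^3 * (y * z * sqrt (y * z) * g) = (m^3 * (y * z * sqrt (y * z))) * g" by (simp only: mult.assoc)
        also have "\<dots> = y * sqrt y * g" using scal3[OF z that] by (simp add: m_def)
        finally show ?thesis .
      qed
      have bp: "0 < b" using ab by linarith
      show ?thesis unfolding Tdir_def k[OF ab(1)] k[OF bp] by (rule refl)
    qed
    finally have h3: "m^3*((sinh F2 - F2) - (sinh F1 - F1)) = Tdir a b e" .
    show ?thesis using sol unfolding h1 h2 h3 by blast
  qed
qed

lemma sol_ov:
  assumes ab: "0 < a" "a < b" and e: "0 < e" "e \<le> 2 / b"
  shows "\<exists>r rd. sol1 r rd (Tov a b e) a b"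
proof -
  have be: "b * e \<le> 2" using e ab by (simp add: field_simps)
  define m where "m = 1 / sqrt e"
  have m: "m > 0" using e by (simp add: m_def)
  have y5: "a * e < b * e" using mult_strict_right_mono[OF ab(2) e(1)] .
  have y: "0 < a * e" "a * e \<le> 2" "0 < b * e" "b * e \<le> 2" "a * e < b * e"
    using e ab be y5 by (auto, linarith)
  define E1 where "E1 = arccos (1 - a * e)"
  define X where "X = arccos (1 - b * e)"
  define E2 where "E2 = 2 * pi - X"
  have E1pi: "E1 < pi"
    using arccos_less_arccos[of "-1" "1 - a*e"] y by (simp add: E1_def)
  have E: "0 < E1" "E1 < E2" "E2 < 2 * pi"
    using G_ell(1)[of "a*e"] G_ell(1)[of "b*e"] G_ell(2)[of "b*e"] y E1pi
    by (auto simp: E1_def E2_def X_def)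
  obtain r rd where sol: "sol1 r rd (m^3*((E2 - sin E2) - (E1 - sin E1))) (m^2*(1 - cos E1)) (m^2*(1 - cos E2))"
    using ell_sol[OF m E] by blast
  have h1: "m^2*(1 - cos E1) = a" unfolding m_def E1_def using G_ell(3)[of "a*e"] y scal2[OF e(1)] by simp
  have h2: "m^2*(1 - cos E2) = b" unfolding m_def E2_def X_def using G_ell(3)[of "b*e"] y scal2[OF e(1)] by simp
  have m3: "m^3 * (2 * pi) = 2 * pi / (e * sqrt e)"
    using e by (simp add: m_def power3_eq_cube)
  have r1: "E1 - sin E1 = a * e * sqrt (a * e) * G (a*e)" unfolding E1_def using G_ell(4)[of "a*e"] y by simp
  have sx: "sin E2 = - sin X" by (simp add: E2_def)
  have gx: "X - sin X = b * e * sqrt (b * e) * G (b*e)" unfolding X_def using G_ell(4)[of "b*e"] y by simp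
  have r2: "E2 - sin E2 = 2 * pi - b * e * sqrt (b * e) * G (b*e)" using sx gx unfolding E2_def by linarith
  have "m^3*((E2 - sin E2) - (E1 - sin E1)) = m^3 * (2 * pi) - m^3 * (b * e * sqrt (b * e) * G (b*e)) - m^3 * (a * e * sqrt (a * e) * G (a*e))"
    unfolding r1 r2 by (simp add: right_diff_distrib)
  also have "\<dots> = Tov a b e"
  proof -
    have k: "m^3 * (y * e * sqrt (y * e) * g) = y * sqrt y * g" if "y > 0" for y g
    proof -
      have "m^3 * (y * e * sqrt (y * e) * g) = (m^3 * (y * e * sqrt (y * e))) * g" by (simp only: mult.assoc)
      also have "\<dots> = y * sqrt y * g" using scal3[OF e(1) that] by (simp add: m_def)
      finally show ?thesis .
    qed
    have bp: "0 < b" using ab by linarith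
    show ?thesis unfolding Tov_def k[OF ab(1)] k[OF bp] m3 by linarith
  qed
  finally have h3: "m^3*((E2 - sin E2) - (E1 - sin E1)) = Tov a b e" .
  show ?thesis using sol unfolding h1 h2 h3 by blast
qed

lemma mult_at_right: "c > 0 \<Longrightarrow> filterlim (\<lambda>e. c * e) (at_right 0) (at_right (0::real))"
proof -
  assume c: "c > 0"
  have "((\<lambda>e. c * e) \<longlongrightarrow> c * 0) (at_right (0::real))" by (intro tendsto_intros)
  then have t: "((\<lambda>e. c * e) \<longlongrightarrow> 0) (at_right (0::real))" by simp
  have "\<forall>\<^sub>F e in at_right (0::real). c * e > 0"
    by (rule eventually_at_rightI[of 0 1]) (use c in auto)
  then show ?thesis by (rule tendsto_imp_filterlim_at_right[OF t])
qed

lemma mult_at_bot: "c > 0 \<Longrightarrow> filterlim (\<lambda>e. c * e) at_bot (at_bot :: real filter)"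
  by (rule filterlim_tendsto_pos_mult_at_bot[OF tendsto_const _ filterlim_ident])

lemma Tdir_bot: "0 < a \<Longrightarrow> 0 < b \<Longrightarrow> (Tdir a b \<longlongrightarrow> 0) at_bot"
proof -
  assume a: "0 < a" and b: "0 < b"
  have ga: "((\<lambda>e. G (a * e)) \<longlongrightarrow> 0) at_bot" by (rule filterlim_compose[OF G_bot mult_at_bot[OF a]])
  have gb: "((\<lambda>e. G (b * e)) \<longlongrightarrow> 0) at_bot" by (rule filterlim_compose[OF G_bot mult_at_bot[OF b]])
  have "((\<lambda>e. b * sqrt b * G (b * e) - a * sqrt a * G (a * e)) \<longlongrightarrow> b * sqrt b * 0 - a * sqrt a * 0) at_bot"
    by (intro tendsto_intros ga gb)
  then show ?thesis unfolding Tdir_def[abs_def] by simp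
qed

lemma inv_pow_top: "filterlim (\<lambda>e::real. 2 * pi / (e * sqrt e)) at_top (at_right 0)"
  by real_asymp

lemma Tov_top: "0 < a \<Longrightarrow> 0 < b \<Longrightarrow> filterlim (Tov a b) at_top (at_right 0)"
proof -
  assume a: "0 < a" and b: "0 < b"
  have ga: "((\<lambda>e. G (a * e)) \<longlongrightarrow> c0) (at_right 0)" by (rule filterlim_compose[OF G_right mult_at_right[OF a]])
  have gb: "((\<lambda>e. G (b * e)) \<longlongrightarrow> c0) (at_right 0)" by (rule filterlim_compose[OF G_right mult_at_right[OF b]])
  have "((\<lambda>e. - (b * sqrt b * G (b * e)) - a * sqrt a * G (a * e)) \<longlongrightarrow> - (b * sqrt b * c0) - a * sqrt a * c0) (at_right 0)"
    by (intro tendsto_intros ga gb)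
  then show ?thesis unfolding Tov_def[abs_def]
    by (rule filterlim_tendsto_add_at_top[OF _ inv_pow_top])
qed

lemma image_le2:
  fixes a b :: real
  assumes "0 < a" "a < b" shows "(\<lambda>e. a * e) ` {..2/b} \<subseteq> {..2}" "(\<lambda>e. b * e) ` {..2/b} \<subseteq> {..2}"
proof -
  have b: "b > 0" using assms by linarith
  have be: "b * e \<le> 2" if "e \<le> 2/b" for e using that b by (simp add: field_simps)
  have ae: "a * e \<le> 2" if "e \<le> 2/b" for e
  proof (cases "e \<le> 0")
    case True then show ?thesis using assms by (smt (verit) mult_nonneg_nonpos)
  next
    case False then have "a * e < b * e" using assms by (simp add: mult_strict_right_mono)
    then show ?thesis using be[OF that] by linarith
  qed
  show "(\<lambda>e. a * e) ` {..2/b} \<subseteq> {..2}" using ae by auto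
  show "(\<lambda>e. b * e) ` {..2/b} \<subseteq> {..2}" using be by auto
qed

lemma Gab_cont:
  assumes "0 < a" "a < b" "S \<subseteq> {..2/b}"
  shows "continuous_on S (\<lambda>e. G (a * e))" "continuous_on S (\<lambda>e. G (b * e))"
proof -
  have s: "(\<lambda>e. a * e) ` S \<subseteq> {..2}" "(\<lambda>e. b * e) ` S \<subseteq> {..2}"
    using image_le2[OF assms(1,2)] assms(3) by blast+
  show "continuous_on S (\<lambda>e. G (a * e))"
    by (rule continuous_on_compose2[OF G_cont _ s(1)]) (intro continuous_intros)
  show "continuous_on S (\<lambda>e. G (b * e))"
    by (rule continuous_on_compose2[OF G_cont _ s(2)]) (intro continuous_intros)
qed

lemma Tdir_cont: "0 < a \<Longrightarrow> a < b \<Longrightarrow> continuous_on {e0..2/b} (Tdir a b)"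
  unfolding Tdir_def[abs_def]
  using Gab_cont[of a b "{e0..2/b}"] by (intro continuous_intros) auto

lemma Tov_cont: "0 < a \<Longrightarrow> a < b \<Longrightarrow> 0 < e1 \<Longrightarrow> continuous_on {e1..2/b} (Tov a b)"
  unfolding Tov_def[abs_def]
  using Gab_cont[of a b "{e1..2/b}"] by (intro continuous_intros) auto

lemma Tov_eq: "0 < a \<Longrightarrow> 0 < b \<Longrightarrow> Tov a b (2/b) = Tdir a b (2/b)"
proof -
  assume a: "0 < a" and b: "0 < b"
  have G2: "G 2 = pi / (2 * sqrt 2)" by (simp add: G_def He_def)
  have bb: "b * (2 / b) = 2" using b by simp
  have "2 * pi / (2 / b * sqrt (2 / b)) = 2 * (b * sqrt b * (pi / (2 * sqrt 2)))"
    using b by (simp add: real_sqrt_divide field_simps)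
  then show ?thesis unfolding Tov_def Tdir_def bb G2 by linarith
qed

lemma exist_lt:
  assumes ab: "0 < a" "a < b" and T: "T > 0"
  shows "\<exists>r rd. sol1 r rd T a b"
proof -
  have b: "0 < b" using ab by linarith
  show ?thesis
  proof (cases "T \<le> Tdir a b (2/b)")
    case True
    have "\<forall>\<^sub>F e in at_bot. Tdir a b e < T"
      using order_tendstoD(2)[OF Tdir_bot[OF ab(1) b] T] .
    then obtain N where N: "\<And>e. e \<le> N \<Longrightarrow> Tdir a b e < T"
      unfolding eventually_at_bot_linorder by blast
    define e0 where "e0 = min N 0"
    have e00: "e0 \<le> 0" by (simp add: e0_def)
    have "0 \<le> 2/b" using b by simp
    then have e01: "e0 \<le> 2/b" using e00 by linarith
    have "e0 \<le> N" by (simp add: e0_def)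
    then have e0: "e0 \<le> 2/b" "Tdir a b e0 \<le> T" using N[of e0] e01 by auto
    obtain e where e: "e0 \<le> e" "e \<le> 2/b" "Tdir a b e = T"
      using IVT'[of "Tdir a b" e0 T "2/b", OF e0(2) True e0(1) Tdir_cont[OF ab]] by blast
    show ?thesis using sol_dir[OF ab e(2)] e(3) by simp
  next
    case False
    have "\<forall>\<^sub>F e in at_right 0. T \<le> Tov a b e"
      using Tov_top[OF ab(1) b] unfolding filterlim_at_top by blast
    then obtain d where d: "d > 0" "\<And>e. 0 < e \<Longrightarrow> e < d \<Longrightarrow> T \<le> Tov a b e"
      unfolding eventually_at_right_field by blast
    define e1 where "e1 = min (d/2) (1/b)"
    have e1: "0 < e1" "e1 < d" "e1 \<le> 2/b" using d b by (auto simp: e1_def min_def field_simps)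
    have t1: "T \<le> Tov a b e1" using d(2) e1 by blast
    have t2: "Tov a b (2/b) \<le> T" using False Tov_eq[OF ab(1) b] by linarith
    obtain e where e: "e1 \<le> e" "e \<le> 2/b" "Tov a b e = T"
      using IVT2'[of "Tov a b" "2/b" T e1, OF t2 t1 e1(3) Tov_cont[OF ab e1(1)]] by blast
    have "0 < e" using e e1 by linarith
    then show ?thesis using sol_ov[OF ab _ e(2)] e(3) by simp
  qed
qed

lemma sol_rev:
  assumes s: "sol1 r rd T a b" and T: "T \<ge> 0"
  shows "sol1 (\<lambda>t. r (T - t)) (\<lambda>t. - rd (T - t)) T b a"
  unfolding sol1_def
proof (intro conjI ballI)
  show "r (T - 0) = b" using s by (simp add: sol1_def)
  show "r (T - T) = a" using s by (simp add: sol1_def)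
next
  fix t assume t: "t \<in> {0..T}"
  then have t': "T - t \<in> {0..T}" by auto
  note st = s[unfolded sol1_def, THEN conjunct2, THEN conjunct2, rule_format, OF t']
  show "r (T - t) > 0" using st by simp
  have "((\<lambda>t. r (T - t)) has_real_derivative rd (T - t) * (- 1)) (at t)"
    by (rule DERIV_chain2[where f=r and g="\<lambda>t. T - t", OF conjunct1[OF conjunct2[OF st]]])
       (auto intro!: derivative_eq_intros)
  then show "((\<lambda>t. r (T - t)) has_real_derivative - rd (T - t)) (at t)" by simp
  have "((\<lambda>t. rd (T - t)) has_real_derivative (-1 / (r (T - t))^2) * (- 1)) (at t)"
    by (rule DERIV_chain2[where f=rd and g="\<lambda>t. T - t", OF conjunct2[OF conjunct2[OF st]]])
       (auto intro!: derivative_eq_intros)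
  then have "((\<lambda>t. - rd (T - t)) has_real_derivative - ((-1 / (r (T - t))^2) * (- 1))) (at t)"
    by (rule DERIV_minus)
  then show "((\<lambda>t. - rd (T - t)) has_real_derivative -1 / (r (T - t))^2) (at t)" by simp
qed

lemma exist_sol:
  assumes "0 < a" "0 < b" "a \<noteq> b" "T > 0"
  shows "\<exists>r rd. sol1 r rd T a b"
proof (cases "a < b")
  case True then show ?thesis using exist_lt assms by blast
next
  case False
  then have "b < a" using assms by linarith
  then obtain r rd where "sol1 r rd T b a" using exist_lt assms by blast
  from sol_rev[OF this] assms show ?thesis by auto
qed

lemma max_princ:
  fixes d dp dpp :: "real \<Rightarrow> real"
  assumes ce: "c < e"
  and d0: "d c = 0" "d e = 0"
  and dd: "\<And>t. t \<in> {c..e} \<Longrightarrow> (d has_real_derivative dp t) (at t within {c..e})"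
  and ddp: "\<And>t. t \<in> {c..e} \<Longrightarrow> (dp has_real_derivative dpp t) (at t within {c..e})"
  and pos: "\<And>t. t \<in> {c..e} \<Longrightarrow> d t > 0 \<Longrightarrow> dpp t > 0"
  shows "\<forall>t\<in>{c..e}. d t \<le> 0"
proof (rule ccontr)
  assume "\<not> (\<forall>t\<in>{c..e}. d t \<le> 0)"
  then obtain t where t: "t \<in> {c..e}" "d t > 0" by force
  have cont: "continuous_on {c..e} d"
    unfolding continuous_on_eq_continuous_within
    using dd DERIV_continuous by blast
  obtain x where x: "x \<in> {c..e}" "\<And>y. y \<in> {c..e} \<Longrightarrow> d y \<le> d x"
    using continuous_attains_sup[OF compact_Icc _ cont] ce by force
  have dx: "d x > 0" using x(2)[OF t(1)] t(2) by linarith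
  have xi: "c < x" "x < e" using x(1) dx d0 by (auto simp: less_le)
  have atx: "at x within {c..e} = at x" using xi by (rule at_within_Icc_at)
  have D: "(d has_real_derivative dp x) (at x)" using dd[OF x(1)] atx by simp
  have D1: "(dp has_real_derivative dpp x) (at x)" using ddp[OF x(1)] atx by simp
  have z: "dp x = 0"
  proof (rule DERIV_local_max[OF D, of "min (x - c) (e - x)"])
    show "0 < min (x - c) (e - x)" using xi by simp
    show "\<forall>y. \<bar>x - y\<bar> < min (x - c) (e - x) \<longrightarrow> d y \<le> d x"
      using x(2) by (auto simp: abs_if split: if_splits)
  qed
  have p2: "dpp x > 0" using pos[OF x(1) dx] .
  obtain \<delta> where \<delta>: "\<delta> > 0" "\<And>h. h > 0 \<Longrightarrow> h < \<delta> \<Longrightarrow> dp x < dp (x + h)"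
    using DERIV_pos_inc_right[OF D1 p2] by blast
  define h where "h = min (\<delta>/2) ((e - x)/2)"
  have h1: "h \<le> \<delta>/2" "h \<le> (e - x)/2" unfolding h_def by (rule min.cobounded1, rule min.cobounded2)
  have h: "0 < h" "h < \<delta>" "x + h < e" using \<delta> xi h1 by (auto simp: h_def)
  have "\<forall>y. x \<le> y \<and> y \<le> x + h \<longrightarrow> (d has_real_derivative dp y) (at y)"
  proof (intro allI impI)
    fix y assume y: "x \<le> y \<and> y \<le> x + h"
    then have "c < y" "y < e" using xi h by auto
    then have "at y within {c..e} = at y" by (rule at_within_Icc_at)
    then show "(d has_real_derivative dp y) (at y)" using dd[of y] \<open>c < y\<close> \<open>y < e\<close> by simp
  qed
  then obtain zz where zz: "x < zz" "zz < x + h" "d (x + h) - d x = (x + h - x) * dp zz"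
    using MVT2[of x "x + h" d dp] h by auto
  have "dp zz > 0" using \<delta>(2)[of "zz - x"] zz h z by auto
  then have "d (x + h) > d x" using zz h by (simp add: algebra_simps)
  moreover have "x + h \<in> {c..e}" using xi h by auto
  ultimately show False using x(2) by force
qed

lemma bvp_unique:
  fixes f g fd gd :: "real \<Rightarrow> real"
  assumes ce: "c < e"
  and ends: "f c = g c" "f e = g e"
  and f: "\<And>t. t \<in> {c..e} \<Longrightarrow> f t > 0 \<and> (f has_real_derivative fd t) (at t within {c..e})
     \<and> (fd has_real_derivative (-1/(f t)^2)) (at t within {c..e})"
  and g: "\<And>t. t \<in> {c..e} \<Longrightarrow> g t > 0 \<and> (g has_real_derivative gd t) (at t within {c..e})
     \<and> (gd has_real_derivative (-1/(g t)^2)) (at t within {c..e})"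
  shows "\<forall>t\<in>{c..e}. f t = g t"
proof -
  have key: "\<forall>t\<in>{c..e}. p t - q t \<le> 0"
    if p: "\<And>t. t \<in> {c..e} \<Longrightarrow> p t > 0 \<and> (p has_real_derivative pd t) (at t within {c..e})
     \<and> (pd has_real_derivative (-1/(p t)^2)) (at t within {c..e})"
    and q: "\<And>t. t \<in> {c..e} \<Longrightarrow> q t > 0 \<and> (q has_real_derivative qd t) (at t within {c..e})
     \<and> (qd has_real_derivative (-1/(q t)^2)) (at t within {c..e})"
    and pe: "p c = q c" "p e = q e"
    for p q pd qd :: "real \<Rightarrow> real"
  proof (rule max_princ[OF ce, where dp="\<lambda>t. pd t - qd t" and dpp="\<lambda>t. -1/(p t)^2 + 1/(q t)^2"])
    show "p c - q c = 0" "p e - q e = 0" using pe by auto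
  next
    fix t assume t: "t \<in> {c..e}"
    show "((\<lambda>t. p t - q t) has_real_derivative pd t - qd t) (at t within {c..e})"
      using p[OF t] q[OF t] by (intro DERIV_diff) auto
    have "((\<lambda>t. pd t - qd t) has_real_derivative (-1/(p t)^2) - (-1/(q t)^2)) (at t within {c..e})"
      using p[OF t] q[OF t] by (intro DERIV_diff) auto
    then show "((\<lambda>t. pd t - qd t) has_real_derivative -1/(p t)^2 + 1/(q t)^2) (at t within {c..e})"
      by simp
    assume "p t - q t > 0"
    then have "q t < p t" by simp
    then have "(q t)^2 < (p t)^2" using q[OF t] by (intro power_strict_mono) auto
    moreover have "0 < (q t)^2" using q[OF t] by simp
    ultimately have "inverse ((p t)^2) < inverse ((q t)^2)" by (rule less_imp_inverse_less)
    then have "1/(p t)^2 < 1/(q t)^2" by (simp add: inverse_eq_divide)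
    then show "-1/(p t)^2 + 1/(q t)^2 > 0" by simp
  qed
  have "\<forall>t\<in>{c..e}. f t - g t \<le> 0" using key[OF f g] ends by blast
  moreover have "\<forall>t\<in>{c..e}. g t - f t \<le> 0" using key[OF g f] ends by force
  ultimately show ?thesis by force
qed

lemma inner_deriv:
  "(f has_vector_derivative f') F \<Longrightarrow> ((\<lambda>t. z \<bullet> f t) has_real_derivative z \<bullet> f') F"
proof -
  assume "(f has_vector_derivative f') F"
  then have "((\<lambda>t. z \<bullet> f t) has_vector_derivative z \<bullet> f') F"
    by (rule bounded_linear.has_vector_derivative[OF bounded_linear_inner_right])
  then show ?thesis by (simp add: has_real_derivative_iff_has_vector_derivative)
qed

lemma reduce_classical:
  fixes Oc u0 :: "'a::euclidean_space"
  assumes cl: "kepler_classical Oc q t0 t1" and lt: "t0 < t1"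
  and dir: "Oc \<notin> convex hull (q ` {t0..t1})"
  and u0: "norm u0 = 1"
  and A: "q t0 = Oc + \<alpha> *\<^sub>R u0" "\<alpha> > 0" and B: "q t1 = Oc + \<beta> *\<^sub>R u0" "\<beta> > 0"
  shows "\<exists>\<rho> \<rho>d. \<forall>t\<in>{t0..t1}. \<rho> t > 0 \<and> q t = Oc + \<rho> t *\<^sub>R u0 \<and>
     (\<rho> has_real_derivative \<rho>d t) (at t within {t0..t1}) \<and>
     (\<rho>d has_real_derivative -1/(\<rho> t)^2) (at t within {t0..t1})"
proof -
  define I where "I = {t0..t1}"
  obtain v where V: "\<And>t. t \<in> I \<Longrightarrow> q t \<noteq> Oc \<and> (q has_vector_derivative v t) (at t within I) \<and>
        (v has_vector_derivative (- (1 / norm (q t - Oc) ^ 3) *\<^sub>R (q t - Oc))) (at t within I)"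
    using cl unfolding kepler_classical_def I_def by blast
  define x where "x t = q t - Oc" for t
  define acc where "acc t = - (1 / norm (x t) ^ 3) *\<^sub>R x t" for t
  have dx: "(x has_vector_derivative v t) (at t within I)" if "t \<in> I" for t
    unfolding x_def using V[OF that] by (auto intro!: derivative_eq_intros)
  have dv: "(v has_vector_derivative acc t) (at t within I)" if "t \<in> I" for t
    unfolding acc_def x_def using V[OF that] by simp
  have cq: "continuous_on I q"
    unfolding continuous_on_eq_continuous_within using V has_vector_derivative_continuous by blast
  have cpt: "compact (convex hull (q ` I))"
    by (intro compact_convex_hull compact_continuous_image cq) (simp add: I_def)
  obtain w c' where wc: "w \<bullet> Oc < c'" "\<And>y. y \<in> convex hull (q ` I) \<Longrightarrow> c' < w \<bullet> y"
    using separating_hyperplane_closed_point[OF convex_convex_hull compact_imp_closed[OF cpt], of Oc]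
      dir unfolding I_def by blast
  have wpos: "w \<bullet> x t > 0" if "t \<in> I" for t
  proof -
    have "q t \<in> convex hull (q ` I)" using that by (intro hull_inc imageI)
    then have "c' < w \<bullet> q t" by (rule wc(2))
    then show ?thesis using wc(1) by (simp add: x_def inner_diff_right)
  qed
  have t0I: "t0 \<in> I" "t1 \<in> I" using lt by (auto simp: I_def)
  have x0: "x t0 = \<alpha> *\<^sub>R u0" "x t1 = \<beta> *\<^sub>R u0" using A B by (auto simp: x_def)
  have wu0: "w \<bullet> u0 > 0"
  proof -
    have "0 < w \<bullet> x t0" using wpos t0I by blast
    then have "0 < \<alpha> * (w \<bullet> u0)" using x0 by simp
    then show ?thesis using A(2) by (simp add: zero_less_mult_iff)
  qed
  define Bz where "Bz z t = (z \<bullet> x t) * (w \<bullet> v t) - (z \<bullet> v t) * (w \<bullet> x t)" for z t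
  have dB: "((Bz z) has_real_derivative 0) (at t within I)" if t: "t \<in> I" for z t
  proof -
    have "((Bz z) has_real_derivative
       ((z \<bullet> x t) * (w \<bullet> acc t) + (z \<bullet> v t) * (w \<bullet> v t)) - ((z \<bullet> v t) * (w \<bullet> v t) + (z \<bullet> acc t) * (w \<bullet> x t)))
         (at t within I)"
      unfolding Bz_def[abs_def]
      by (intro DERIV_diff DERIV_mult' inner_deriv dx dv t)
    moreover have "((z \<bullet> x t) * (w \<bullet> acc t) + (z \<bullet> v t) * (w \<bullet> v t)) - ((z \<bullet> v t) * (w \<bullet> v t) + (z \<bullet> acc t) * (w \<bullet> x t)) = 0"
      by (simp add: acc_def algebra_simps)
    ultimately show ?thesis by simp
  qed
  have Bc: "Bz z t = Bz z t0" if t: "t \<in> I" for z t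
  proof -
    obtain C where "\<forall>s\<in>I. Bz z s = C"
      using has_field_derivative_zero_constant[of I "Bz z"] dB by (auto simp: I_def)
    then show ?thesis using t t0I by auto
  qed
  define phi where "phi z t = (z \<bullet> x t) / (w \<bullet> x t)" for z t
  have dphi: "((phi z) has_real_derivative - Bz z t / ((w \<bullet> x t) * (w \<bullet> x t))) (at t within I)"
    if t: "t \<in> I" for z t
  proof -
    have "((phi z) has_real_derivative ((z \<bullet> v t) * (w \<bullet> x t) - (z \<bullet> x t) * (w \<bullet> v t)) / ((w \<bullet> x t) * (w \<bullet> x t)))
        (at t within I)"
      unfolding phi_def[abs_def]
      using wpos[OF t] by (intro DERIV_divide inner_deriv dx t) auto
    moreover have "(z \<bullet> v t) * (w \<bullet> x t) - (z \<bullet> x t) * (w \<bullet> v t) = - Bz z t"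
      by (simp add: Bz_def algebra_simps)
    ultimately show ?thesis by simp
  qed
  have cphi: "continuous_on I (phi z)" for z
    unfolding continuous_on_eq_continuous_within using dphi DERIV_continuous by blast
  have phi_end: "phi z t1 = phi z t0" for z
    using A(2) B(2) by (simp add: phi_def x0)
  have B0: "Bz z t0 = 0" for z
  proof (rule ccontr)
    assume ne: "Bz z t0 \<noteq> 0"
    have atI: "at s within I = at s" if "t0 < s" "s < t1" for s
      unfolding I_def using that by (rule at_within_Icc_at)
    have dat: "DERIV (phi z) s :> - Bz z t0 / ((w \<bullet> x s) * (w \<bullet> x s))" if "t0 < s" "s < t1" for s
    proof -
      have "s \<in> I" using that by (auto simp: I_def)
      then show ?thesis using dphi[of s z] Bc[of s z] atI[OF that] by simp
    qed
    have sq: "(w \<bullet> x s) * (w \<bullet> x s) > 0" if "t0 < s" "s < t1" for s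
      using wpos[of s] that by (auto simp: I_def)
    consider "Bz z t0 > 0" | "Bz z t0 < 0" using ne by linarith
    then show False
    proof cases
      case 1
      have ex: "\<exists>y. DERIV (phi z) s :> y \<and> y < 0" if s: "t0 < s" "s < t1" for s
      proof -
        have "Bz z t0 / ((w \<bullet> x s) * (w \<bullet> x s)) > 0" using sq[OF s] 1 by simp
        then show ?thesis using dat[OF s] by (intro exI[of _ "- Bz z t0 / ((w \<bullet> x s) * (w \<bullet> x s))"]) auto
      qed
      have "phi z t1 < phi z t0"
        using DERIV_neg_imp_decreasing_open[OF lt ex] cphi[of z] unfolding I_def by blast
      then show False using phi_end by simp
    next
      case 2
      have ex: "\<exists>y. DERIV (phi z) s :> y \<and> y > 0" if s: "t0 < s" "s < t1" for s
      proof -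
        have "Bz z t0 / ((w \<bullet> x s) * (w \<bullet> x s)) < 0" using sq[OF s] 2 by (simp add: divide_neg_pos)
        then show ?thesis using dat[OF s] by (intro exI[of _ "- Bz z t0 / ((w \<bullet> x s) * (w \<bullet> x s))"]) auto
      qed
      have "phi z t0 < phi z t1"
        using DERIV_pos_imp_increasing_open[OF lt ex] cphi[of z] unfolding I_def by blast
      then show False using phi_end by simp
    qed
  qed
  have phic: "phi z t = phi z t0" if t: "t \<in> I" for z t
  proof -
    have "\<forall>s\<in>I. ((phi z) has_real_derivative 0) (at s within I)"
      using dphi Bc B0 by simp
    then obtain C where "\<forall>s\<in>I. phi z s = C"
      using has_field_derivative_zero_constant[of I "phi z"] by (auto simp: I_def)
    then show ?thesis using t t0I by auto
  qed
  have xr: "x t = (u0 \<bullet> x t) *\<^sub>R u0" if t: "t \<in> I" for t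
  proof -
    define r where "r = (w \<bullet> x t) / (w \<bullet> u0)"
    have zz: "z \<bullet> x t = r * (z \<bullet> u0)" for z
    proof -
      have "phi z t = phi z t0" by (rule phic[OF t])
      then have "(z \<bullet> x t) / (w \<bullet> x t) = (z \<bullet> u0) / (w \<bullet> u0)"
        using A(2) by (simp add: phi_def x0)
      then show ?thesis using wpos[OF t] wu0 by (simp add: r_def field_simps)
    qed
    define y where "y = x t - r *\<^sub>R u0"
    have "y \<bullet> y = 0" unfolding y_def using zz[of "x t - r *\<^sub>R u0"]
      by (simp add: inner_diff_right)
    then have "x t = r *\<^sub>R u0" by (simp add: y_def)
    moreover have "u0 \<bullet> u0 = 1" using u0 by (simp add: dot_square_norm)
    ultimately show ?thesis by simp
  qed
  have rpos: "u0 \<bullet> x t > 0" if t: "t \<in> I" for t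
  proof -
    have "w \<bullet> x t = (u0 \<bullet> x t) * (w \<bullet> u0)" using xr[OF t] by (metis inner_scaleR_right)
    then show ?thesis using wpos[OF t] wu0 by (simp add: zero_less_mult_iff)
  qed
  show ?thesis
  proof (intro exI ballI conjI)
    fix t assume t0: "t \<in> {t0..t1}"
    then have t: "t \<in> I" by (simp add: I_def)
    show "u0 \<bullet> x t > 0" using rpos[OF t] .
    show "q t = Oc + (u0 \<bullet> x t) *\<^sub>R u0" using xr[OF t] by (simp add: x_def algebra_simps)
    show "((\<lambda>t. u0 \<bullet> x t) has_real_derivative u0 \<bullet> v t) (at t within {t0..t1})"
      using inner_deriv[OF dx[OF t]] by (simp add: I_def)
    have nx: "norm (x t) = u0 \<bullet> x t"
      using xr[OF t] rpos[OF t] u0 by (metis abs_of_pos mult.right_neutral norm_scaleR)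
    have "u0 \<bullet> acc t = - 1 / (u0 \<bullet> x t)^2"
      using rpos[OF t] by (simp add: acc_def nx power2_eq_square power3_eq_cube field_simps)
    then show "((\<lambda>t. u0 \<bullet> v t) has_real_derivative - 1 / (u0 \<bullet> x t)^2) (at t within {t0..t1})"
      using inner_deriv[OF dv[OF t], of u0] by (simp add: I_def)
  qed
qed

lemma reduce_bounce:
  fixes Oc u0 :: "'a::euclidean_space"
  assumes bo: "kepler_rectilinear_bounce Oc q t0 t1" and le: "t0 \<le> t1"
  and dir: "Oc \<notin> convex hull (q ` {t0..t1})"
  and u0: "norm u0 = 1"
  and A: "q t0 = Oc + \<alpha> *\<^sub>R u0" "\<alpha> > 0"
  shows "\<exists>\<rho> \<rho>d. \<forall>t\<in>{t0..t1}. \<rho> t > 0 \<and> q t = Oc + \<rho> t *\<^sub>R u0 \<and>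
     (\<rho> has_real_derivative \<rho>d t) (at t within {t0..t1}) \<and>
     (\<rho>d has_real_derivative -1/(\<rho> t)^2) (at t within {t0..t1})"
proof -
  obtain u r rd h where nu: "norm u = 1"
    and R: "\<forall>t\<in>{t0..t1}. r t \<ge> 0 \<and> q t = Oc + r t *\<^sub>R u"
    and D: "\<forall>t\<in>{t0..t1}. r t \<noteq> 0 \<longrightarrow>
            (r has_real_derivative rd t) (at t within {t0..t1}) \<and>
            (rd has_real_derivative (- 1 / (r t)\<^sup>2)) (at t within {t0..t1}) \<and>
            (rd t)\<^sup>2 / 2 - 1 / r t = h"
    using bo unfolding kepler_rectilinear_bounce_def by blast
  have rpos: "r t > 0" if t: "t \<in> {t0..t1}" for t
  proof (rule ccontr)
    assume "\<not> r t > 0"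
    then have "r t = 0" using R t by force
    then have "q t = Oc" using R t by auto
    moreover have "q t \<in> convex hull (q ` {t0..t1})" using t by (intro hull_inc imageI)
    ultimately show False using dir by simp
  qed
  have t0: "t0 \<in> {t0..t1}" using le by simp
  have eq: "r t0 *\<^sub>R u = \<alpha> *\<^sub>R u0" using R t0 A by auto
  then have "norm (r t0 *\<^sub>R u) = norm (\<alpha> *\<^sub>R u0)" by simp
  then have "r t0 = \<alpha>" using nu u0 rpos[OF t0] A(2) by simp
  then have "u = u0" using eq A(2) by simp
  then have uu: "u = u0" .
  show ?thesis
  proof (rule exI[of _ r], rule exI[of _ rd], intro ballI conjI)
    fix t assume t: "t \<in> {t0..t1}"
    have rt: "r t \<noteq> 0" using rpos[OF t] by simp
    show "r t > 0" using rpos[OF t] .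
    show "q t = Oc + r t *\<^sub>R u0" using R t uu by blast
    show "(r has_real_derivative rd t) (at t within {t0..t1})" using D t rt by blast
    show "(rd has_real_derivative -1/(r t)^2) (at t within {t0..t1})" using D t rt by blast
  qed
qed

lemma convex_ray: "convex ((\<lambda>s. Oc + s *\<^sub>R (u0::'a::euclidean_space)) ` {0<..})"
proof -
  have e: "(\<lambda>s. Oc + s *\<^sub>R u0) ` {0<..} = (+) Oc ` ((\<lambda>s::real. s *\<^sub>R u0) ` {0<..})"
    by (simp add: image_image)
  have l: "linear (\<lambda>s::real. s *\<^sub>R u0)" by (simp add: linear_scaleR_left)
  show ?thesis unfolding e
    by (intro convex_translation convex_linear_image[OF l]) (simp add: convex_real_interval)
qed

theorem mainTheorem4:
  fixes Oc A B :: "'a::euclidean_space"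
  assumes dim: "DIM('a) = 2 \<or> DIM('a) = 3"
    and distinct: "Oc \<noteq> A" "Oc \<noteq> B" "A \<noteq> B"
    and ray: "\<exists>u a b. u \<noteq> 0 \<and> a > 0 \<and> b > 0 \<and> A = Oc + a *\<^sub>R u \<and> B = Oc + b *\<^sub>R u"
    and T: "T > 0"
  shows "\<exists>q. kepler_arc Oc A B q 0 T \<and> direct_arc Oc q 0 T \<and> rectilinear_arc Oc q 0 T \<and>
           (\<forall>q' t0. kepler_arc Oc A B q' t0 (t0 + T) \<and> direct_arc Oc q' t0 (t0 + T)
               \<longrightarrow> (\<forall>s\<in>{0..T}. q' (t0 + s) = q s))"
proof -
  obtain u a b where u: "u \<noteq> 0" "a > 0" "b > 0" "A = Oc + a *\<^sub>R u" "B = Oc + b *\<^sub>R u"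
    using ray by blast
  define nu where "nu = norm u"
  have nu: "nu > 0" using u by (simp add: nu_def)
  define u0 where "u0 = u /\<^sub>R nu"
  have u0: "norm u0 = 1" using nu by (simp add: u0_def nu_def)
  have u0nz: "u0 \<noteq> 0" using u0 by auto
  define \<alpha> where "\<alpha> = a * nu"
  define \<beta> where "\<beta> = b * nu"
  have ab: "\<alpha> > 0" "\<beta> > 0" using u nu by (auto simp: \<alpha>_def \<beta>_def)
  have uu: "u = nu *\<^sub>R u0" using nu by (simp add: u0_def)
  have A': "A = Oc + \<alpha> *\<^sub>R u0" and B': "B = Oc + \<beta> *\<^sub>R u0"
    using u(4,5) by (simp_all add: uu \<alpha>_def \<beta>_def)
  have abne: "\<alpha> \<noteq> \<beta>" using distinct(3) A' B' by auto
  obtain r rd where sol: "sol1 r rd T \<alpha> \<beta>" using exist_sol[OF ab abne T] by blast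
  have r0: "r 0 = \<alpha>" "r T = \<beta>" using sol by (auto simp: sol1_def)
  have rs: "r t > 0 \<and> (r has_real_derivative rd t) (at t) \<and> (rd has_real_derivative (-1/(r t)^2)) (at t)"
    if "t \<in> {0..T}" for t using sol that by (auto simp: sol1_def)
  define q where "q t = Oc + r t *\<^sub>R u0" for t
  define h where "h = (rd 0)^2/2 - 1 / r 0"
  have energy: "(rd t)^2/2 - 1 / r t = h" if t: "t \<in> {0..T}" for t
  proof -
    have "\<forall>s\<in>{0..T}. ((\<lambda>s. (rd s)^2/2 - 1 / r s) has_real_derivative 0) (at s within {0..T})"
    proof
      fix s assume s: "s \<in> {0..T}"
      note rs' = rs[OF s]
      have d: "((\<lambda>s. (rd s)^2/2 - 1 / r s) has_real_derivative
          (2 * rd s * (-1/(r s)^2)) / 2 - (- (rd s) / (r s * r s))) (at s)"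
        using rs' by (auto intro!: derivative_eq_intros simp: power2_eq_square)
      have e: "(2 * rd s * (-1/(r s)^2)) / 2 - (- (rd s) / (r s * r s)) = 0"
        by (simp add: power2_eq_square)
      have "((\<lambda>s. (rd s)^2/2 - 1 / r s) has_real_derivative 0) (at s)"
        using DERIV_cong[OF d e] .
      then show "((\<lambda>s. (rd s)^2/2 - 1 / r s) has_real_derivative 0) (at s within {0..T})"
        by (simp add: has_field_derivative_at_within)
    qed
    moreover have cvx: "convex {0..T}" by (simp add: convex_real_interval)
    ultimately obtain C where "\<forall>s\<in>{0..T}. (rd s)^2/2 - 1 / r s = C"
      using has_field_derivative_zero_constant[of "{0..T}" "\<lambda>s. (rd s)^2/2 - 1 / r s"] by blast
    then show ?thesis using t T by (auto simp: h_def)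
  qed
  have arc: "kepler_arc Oc A B q 0 T"
    unfolding kepler_arc_def
  proof (intro conjI disjI2)
    show "0 < T" by (rule T)
    show "q 0 = A" using r0 A' by (simp add: q_def)
    show "q T = B" using r0 B' by (simp add: q_def)
    show "kepler_rectilinear_bounce Oc q 0 T"
      unfolding kepler_rectilinear_bounce_def
    proof (intro exI conjI ballI impI)
      show "norm u0 = 1" by (rule u0)
      fix t assume t: "t \<in> {0..T}"
      show "0 \<le> r t" using rs[OF t] by simp
      show "q t = Oc + r t *\<^sub>R u0" by (simp add: q_def)
      show "(r has_real_derivative rd t) (at t within {0..T})"
        using rs[OF t] by (simp add: has_field_derivative_at_within)
      show "(rd has_real_derivative (- 1 / (r t)\<^sup>2)) (at t within {0..T})"
        using rs[OF t] by (simp add: has_field_derivative_at_within)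
      show "(rd t)\<^sup>2 / 2 - 1 / r t = h" using energy[OF t] .
    next
      show "continuous_on {0..T} r"
      proof (intro continuous_at_imp_continuous_on ballI)
        fix t assume "t \<in> {0..T}"
        then show "isCont r t" using rs by (blast intro: DERIV_isCont)
      qed
      have e: "{t \<in> {0..T}. r t = 0} = {}" using rs by force
      show "finite {t \<in> {0..T}. r t = 0}" unfolding e by (rule finite.emptyI)
    qed
  qed
  have dir: "direct_arc Oc q 0 T"
    unfolding direct_arc_def
  proof
    let ?S = "(\<lambda>s. Oc + s *\<^sub>R u0) ` {0<..}"
    assume "Oc \<in> convex hull (q ` {0..T})"
    moreover have "q ` {0..T} \<subseteq> ?S"
    proof
      fix y assume "y \<in> q ` {0..T}"
      then obtain t where t: "t \<in> {0..T}" "y = q t" by blast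
      have "r t \<in> {0<..}" using rs[OF t(1)] by simp
      then show "y \<in> ?S" unfolding t(2) q_def by (rule imageI)
    qed
    then have "convex hull (q ` {0..T}) \<subseteq> ?S" by (rule hull_minimal) (rule convex_ray)
    ultimately obtain s where "s > 0" "Oc = Oc + s *\<^sub>R u0" by blast
    then show False using u0nz by simp
  qed
  have rect: "rectilinear_arc Oc q 0 T"
    unfolding rectilinear_arc_def
  proof (rule exI[of _ u0], intro conjI ballI)
    show "u0 \<noteq> 0" by (rule u0nz)
    fix t assume "t \<in> {0..T}"
    show "\<exists>l. q t = Oc + l *\<^sub>R u0" by (rule exI[of _ "r t"]) (simp add: q_def)
  qed
  have uniq: "\<forall>s\<in>{0..T}. q' (t0 + s) = q s"
    if H: "kepler_arc Oc A B q' t0 (t0 + T)" "direct_arc Oc q' t0 (t0 + T)" for q' t0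
  proof -
    have qA: "q' t0 = Oc + \<alpha> *\<^sub>R u0" and qB: "q' (t0 + T) = Oc + \<beta> *\<^sub>R u0"
      using H(1) A' B' by (auto simp: kepler_arc_def)
    have lt: "t0 < t0 + T" using T by simp
    have d: "Oc \<notin> convex hull (q' ` {t0..t0 + T})" using H(2) by (simp add: direct_arc_def)
    obtain \<rho> \<rho>d where P: "\<forall>t\<in>{t0..t0+T}. \<rho> t > 0 \<and> q' t = Oc + \<rho> t *\<^sub>R u0 \<and>
       (\<rho> has_real_derivative \<rho>d t) (at t within {t0..t0+T}) \<and>
       (\<rho>d has_real_derivative -1/(\<rho> t)^2) (at t within {t0..t0+T})"
    proof -
      have "kepler_classical Oc q' t0 (t0 + T) \<or> kepler_rectilinear_bounce Oc q' t0 (t0 + T)"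
        using H(1) by (simp add: kepler_arc_def)
      then show ?thesis
      proof
        assume "kepler_classical Oc q' t0 (t0 + T)"
        from reduce_classical[OF this lt d u0 qA ab(1) qB ab(2)] that show ?thesis by blast
      next
        assume "kepler_rectilinear_bounce Oc q' t0 (t0 + T)"
        from reduce_bounce[OF this _ d u0 qA ab(1)] lt that show ?thesis by auto
      qed
    qed
    have e1: "t0 \<in> {t0..t0+T}" "t0 + T \<in> {t0..t0+T}" using T by auto
    have P0: "q' t0 = Oc + \<rho> t0 *\<^sub>R u0" using P e1(1) by blast
    have P1: "q' (t0 + T) = Oc + \<rho> (t0 + T) *\<^sub>R u0" using P e1(2) by blast
    have \<rho>0: "\<rho> t0 = \<alpha>" "\<rho> (t0 + T) = \<beta>"
      using P0 P1 qA qB u0nz by simp_all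
    define f where "f t = r (t - t0)" for t
    define fd where "fd t = rd (t - t0)" for t
    have F: "f t > 0 \<and> (f has_real_derivative fd t) (at t within {t0..t0+T})
       \<and> (fd has_real_derivative (-1/(f t)^2)) (at t within {t0..t0+T})" if t: "t \<in> {t0..t0+T}" for t
    proof -
      have t': "t - t0 \<in> {0..T}" using t by auto
      note rs' = rs[OF t']
      have "(f has_real_derivative rd (t - t0) * 1) (at t)"
        unfolding f_def
        by (rule DERIV_chain2[where f=r and g="\<lambda>t. t - t0", OF conjunct1[OF conjunct2[OF rs']]])
          (auto intro!: derivative_eq_intros)
      moreover have "(fd has_real_derivative (-1/(r (t - t0))^2) * 1) (at t)"
        unfolding fd_def
        by (rule DERIV_chain2[where f=rd and g="\<lambda>t. t - t0", OF conjunct2[OF conjunct2[OF rs']]])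
          (auto intro!: derivative_eq_intros)
      ultimately show ?thesis using rs' by (simp add: f_def fd_def has_field_derivative_at_within)
    qed
    have "\<forall>t\<in>{t0..t0+T}. \<rho> t = f t"
    proof (rule bvp_unique[OF lt])
      show "\<rho> t0 = f t0" "\<rho> (t0 + T) = f (t0 + T)" using \<rho>0 r0 by (auto simp: f_def)
      show "\<And>t. t \<in> {t0..t0 + T} \<Longrightarrow> \<rho> t > 0 \<and> (\<rho> has_real_derivative \<rho>d t) (at t within {t0..t0 + T}) \<and>
         (\<rho>d has_real_derivative - 1 / (\<rho> t)\<^sup>2) (at t within {t0..t0 + T})" using P by blast
      show "\<And>t. t \<in> {t0..t0 + T} \<Longrightarrow> f t > 0 \<and> (f has_real_derivative fd t) (at t within {t0..t0 + T}) \<and>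
         (fd has_real_derivative - 1 / (f t)\<^sup>2) (at t within {t0..t0 + T})" using F by blast
    qed
    then have eqf: "\<rho> t = f t" if "t \<in> {t0..t0+T}" for t using that by blast
    show ?thesis
    proof
      fix s assume s: "s \<in> {0..T}"
      then have st: "t0 + s \<in> {t0..t0+T}" by auto
      have "q' (t0 + s) = Oc + \<rho> (t0 + s) *\<^sub>R u0" using P st by blast
      also have "\<dots> = q s" using eqf[OF st] by (simp add: f_def q_def)
      finally show "q' (t0 + s) = q s" .
    qed
  qed
  show ?thesis using arc dir rect uniq by blast
qed

end
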